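(* Let $(\mathcal G,\lambda)$ be a small morphism-colored groupoid satisfying the inverse-compatibility condition, and let $I_1$ be the image of $\lambda$. Then the relation $\overset{1}{\sim}$ on $I_1$ is an equivalence relation.
   Context: A morphism-colored category is a pair $(\mathcal C,\lambda)$ where $\mathcal C$ is a category and $\lambda$ assigns to each morphism $f$ a color $\lambda(f)$, such that: whenever $g,f_1,f_2$ with $(f_1,f_2)$ composable satisfy $\lambda(g)=\lambda(f_1\circ f_2)$, there exist composable $g_1,g_2$ with $g=g_1\circ g_2$, $\lambda(g_1)=\lambda(f_1)$, $\lambda(g_2)=\lambda(f_2)$. It is a morphism-colored groupoid if $\mathcal C$ is a groupoid, and small if $\mathcal C$ is small and $\lambda$ is a map into a set. Inverse-compatibility: $\lambda(f)=\lambda(g)$ implies $\lambda(f^{-1})=\lambda(g^{-1})$. The relation $\overset{1}{\sim}$ on $I_1=\lambda(\mathrm{Mor}(\mathcal G))$: for every $l\ge1$ and every pair of composable sequences $(f_1,\dots,f_l)$, $(g_1,\dots,g_l)$ of morphisms of $\mathcal G$ with $\lambda(f_i)=\lambda(g_i)$ for $i=1,\dots,l$, declare $\lambda(f_1\circ\cdots\circ f_l)\overset{1}{\sim}\lambda(g_1\circ\cdots\circ g_l)$; no other pairs are related. *)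

theory Defs
  imports Main
begin

text \<open>Convention: Comp C g f is
  g composed after f, defined (composable pair (g,f)) when Dom g = Cod f.\<close>

record ('o, 'm) cat =
  Obj :: "'o set"
  Mor :: "'m set"
  Dom :: "'m \<Rightarrow> 'o"
  Cod :: "'m \<Rightarrow> 'o"
  Comp :: "'m \<Rightarrow> 'm \<Rightarrow> 'm"
  Ident :: "'o \<Rightarrow> 'm"

definition category :: "('o, 'm) cat \<Rightarrow> bool" where
  "category C \<longleftrightarrow>
     (\<forall>f\<in>Mor C. Dom C f \<in> Obj C \<and> Cod C f \<in> Obj C) \<and>
     (\<forall>f\<in>Mor C. \<forall>g\<in>Mor C. Dom C g = Cod C f \<longrightarrow>
        Comp C g f \<in> Mor C \<and> Dom C (Comp C g f) = Dom C f \<and> Cod C (Comp C g f) = Cod C g) \<and>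
     (\<forall>a\<in>Obj C. Ident C a \<in> Mor C \<and> Dom C (Ident C a) = a \<and> Cod C (Ident C a) = a) \<and>
     (\<forall>f\<in>Mor C. Comp C f (Ident C (Dom C f)) = f \<and> Comp C (Ident C (Cod C f)) f = f) \<and>
     (\<forall>f\<in>Mor C. \<forall>g\<in>Mor C. \<forall>h\<in>Mor C. Dom C h = Cod C g \<longrightarrow> Dom C g = Cod C f \<longrightarrow>
        Comp C h (Comp C g f) = Comp C (Comp C h g) f)"

definition is_inverse :: "('o, 'm) cat \<Rightarrow> 'm \<Rightarrow> 'm \<Rightarrow> bool" where
  "is_inverse C f g \<longleftrightarrow> g \<in> Mor C \<and> Dom C g = Cod C f \<and> Cod C g = Dom C f \<and>
     Comp C g f = Ident C (Dom C f) \<and> Comp C f g = Ident C (Cod C f)"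

definition groupoid :: "('o, 'm) cat \<Rightarrow> bool" where
  "groupoid C \<longleftrightarrow> category C \<and> (\<forall>f\<in>Mor C. \<exists>g. is_inverse C f g)"

definition morphism_colored :: "('o, 'm) cat \<Rightarrow> ('m \<Rightarrow> 'c) \<Rightarrow> bool" where
  "morphism_colored C col \<longleftrightarrow>
     (\<forall>g\<in>Mor C. \<forall>f1\<in>Mor C. \<forall>f2\<in>Mor C. Dom C f1 = Cod C f2 \<longrightarrow> col g = col (Comp C f1 f2) \<longrightarrow>
        (\<exists>g1\<in>Mor C. \<exists>g2\<in>Mor C. Dom C g1 = Cod C g2 \<and> g = Comp C g1 g2 \<and>
            col g1 = col f1 \<and> col g2 = col f2))"

definition inverse_compatible :: "('o, 'm) cat \<Rightarrow> ('m \<Rightarrow> 'c) \<Rightarrow> bool" where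
  "inverse_compatible C col \<longleftrightarrow>
     (\<forall>f\<in>Mor C. \<forall>g\<in>Mor C. \<forall>f' g'. is_inverse C f f' \<longrightarrow> is_inverse C g g' \<longrightarrow>
        col f = col g \<longrightarrow> col f' = col g')"

definition composable_seq :: "('o, 'm) cat \<Rightarrow> 'm list \<Rightarrow> bool" where
  "composable_seq C fs \<longleftrightarrow> fs \<noteq> [] \<and> set fs \<subseteq> Mor C \<and>
     (\<forall>i. Suc i < length fs \<longrightarrow> Dom C (fs ! i) = Cod C (fs ! Suc i))"

text \<open>f_1 \<circ> ... \<circ> f_l (right-nested; bracketing is irrelevant by associativity).\<close>
fun comp_list :: "('o, 'm) cat \<Rightarrow> 'm list \<Rightarrow> 'm" where
  "comp_list C [] = undefined"
| "comp_list C [f] = f"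
| "comp_list C (f # g # fs) = Comp C f (comp_list C (g # fs))"

definition sim1 :: "('o, 'm) cat \<Rightarrow> ('m \<Rightarrow> 'c) \<Rightarrow> 'c \<Rightarrow> 'c \<Rightarrow> bool" where
  "sim1 C col a b \<longleftrightarrow>
     (\<exists>fs gs. composable_seq C fs \<and> composable_seq C gs \<and> length fs = length gs \<and>
        (\<forall>i < length fs. col (fs ! i) = col (gs ! i)) \<and>
        a = col (comp_list C fs) \<and> b = col (comp_list C gs))"

end

theory Submission
  imports Defs
begin

definition fct :: "('o, 'm) cat \<Rightarrow> ('m \<Rightarrow> 'c) \<Rightarrow> 'm \<Rightarrow> 'c list \<Rightarrow> bool" where
  "fct C col m cs \<longleftrightarrow> (\<exists>ms. composable_seq C ms \<and> map col ms = cs \<and> comp_list C ms = m)"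

lemma cs_single: "composable_seq C [f] \<longleftrightarrow> f \<in> Mor C"
  by (simp add: composable_seq_def)

lemma cs_nil[simp]: "\<not> composable_seq C []"
  by (simp add: composable_seq_def)

lemma cs_cons: "composable_seq C (x # y # r) \<longleftrightarrow> x \<in> Mor C \<and> Dom C x = Cod C y \<and> composable_seq C (y # r)"
  unfolding composable_seq_def
  by (auto simp: nth_Cons split: nat.splits)

lemma comp_props:
  assumes cat: "category C"
  shows "composable_seq C ms \<Longrightarrow> comp_list C ms \<in> Mor C \<and> Dom C (comp_list C ms) = Dom C (last ms)
     \<and> Cod C (comp_list C ms) = Cod C (hd ms)"
proof (induction ms rule: induct_list012)
  case 1 then show ?case by (simp add: composable_seq_def)
next
  case (2 f) then show ?case by (simp add: composable_seq_def)
next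
  case (3 f g fs)
  then show ?case using cat unfolding category_def by (auto simp: cs_cons)
qed

lemma cs_append:
  "composable_seq C xs \<Longrightarrow> composable_seq C ys \<Longrightarrow> Dom C (last xs) = Cod C (hd ys)
   \<Longrightarrow> composable_seq C (xs @ ys)"
proof (induction xs rule: induct_list012)
  case 1 then show ?case by (simp add: composable_seq_def)
next
  case (2 f) then show ?case
    by (cases ys) (auto simp: cs_single cs_cons)
next
  case (3 f g fs)
  then show ?case by (auto simp: cs_cons)
qed

lemma comp_append:
  assumes cat: "category C"
  shows "composable_seq C xs \<Longrightarrow> composable_seq C ys \<Longrightarrow> Dom C (last xs) = Cod C (hd ys)
   \<Longrightarrow> comp_list C (xs @ ys) = Comp C (comp_list C xs) (comp_list C ys)"
proof (induction xs rule: induct_list012)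
  case 1 then show ?case by (simp add: composable_seq_def)
next
  case (2 f) then show ?case
    by (cases ys) (auto simp: composable_seq_def)
next
  case (3 f g fs)
  hence ih: "comp_list C ((g # fs) @ ys) = Comp C (comp_list C (g # fs)) (comp_list C ys)"
    by (auto simp: cs_cons)
  have ys: "ys \<noteq> []" using 3 by (simp add: composable_seq_def)
  then obtain y r where yr: "ys = y # r" by (cases ys) auto
  have p1: "comp_list C (g#fs) \<in> Mor C" "Cod C (comp_list C (g#fs)) = Cod C g"
    "Dom C (comp_list C (g#fs)) = Dom C (last (g#fs))"
    using comp_props[OF cat] 3 by (auto simp: cs_cons)
  have p2: "comp_list C ys \<in> Mor C" "Cod C (comp_list C ys) = Cod C y"
    using comp_props[OF cat, of ys] 3 yr by auto
  have f: "f \<in> Mor C" "Dom C f = Cod C g" using 3 by (auto simp: cs_cons)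
  have dl: "Dom C (last (g#fs)) = Cod C y" using 3 yr by simp
  have "comp_list C ((f # g # fs) @ ys) = Comp C f (comp_list C ((g # fs) @ ys))"
    by simp
  also have "\<dots> = Comp C f (Comp C (comp_list C (g # fs)) (comp_list C ys))" using ih by simp
  also have "\<dots> = Comp C (Comp C f (comp_list C (g # fs))) (comp_list C ys)"
    using cat f p1 p2 dl unfolding category_def by auto
  finally show ?case by simp
qed

context
  fixes C :: "('o, 'm) cat" and col :: "'m \<Rightarrow> 'c"
  assumes cat: "category C" and mc: "morphism_colored C col"
begin

lemma fct_mor: "fct C col m cs \<Longrightarrow> m \<in> Mor C"
  unfolding fct_def using comp_props[OF cat] by blast

lemma fct_ne: "fct C col m cs \<Longrightarrow> cs \<noteq> []"
  unfolding fct_def composable_seq_def by auto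

lemma fct_single: "m \<in> Mor C \<Longrightarrow> fct C col m [col m]"
  unfolding fct_def by (auto intro!: exI[of _ "[m]"] simp: cs_single)

lemma fct_single_iff: "fct C col m [x] \<longleftrightarrow> m \<in> Mor C \<and> col m = x"
  unfolding fct_def by (auto simp: cs_single intro!: exI[of _ "[m]"])

lemma fct_append:
  assumes "fct C col x cs" "fct C col y ds" "Dom C x = Cod C y"
  shows "fct C col (Comp C x y) (cs @ ds)"
proof -
  obtain xs where xs: "composable_seq C xs" "map col xs = cs" "comp_list C xs = x"
    using assms(1) unfolding fct_def by blast
  obtain ys where ys: "composable_seq C ys" "map col ys = ds" "comp_list C ys = y"
    using assms(2) unfolding fct_def by blast
  have d: "Dom C (last xs) = Cod C (hd ys)"
    using comp_props[OF cat, OF xs(1)] comp_props[OF cat, OF ys(1)] xs ys assms(3) by simp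
  show ?thesis unfolding fct_def
    by (rule exI[of _ "xs @ ys"])
      (simp add: cs_append[OF xs(1) ys(1) d] comp_append[OF cat xs(1) ys(1) d] xs ys)
qed

lemma fct_cons:
  assumes "fct C col m (x # y # r)"
  shows "\<exists>m1 m'. m1 \<in> Mor C \<and> col m1 = x \<and> fct C col m' (y # r) \<and> Dom C m1 = Cod C m'
     \<and> m = Comp C m1 m'"
proof -
  obtain ms where ms: "composable_seq C ms" "map col ms = x # y # r" "comp_list C ms = m"
    using assms unfolding fct_def by (elim exE conjE) simp
  then obtain m1 m2 rest where e: "ms = m1 # m2 # rest"
    by (cases ms; cases "tl ms") auto
  have "composable_seq C (m2 # rest)" "m1 \<in> Mor C" "Dom C m1 = Cod C m2"
    using ms(1) e by (auto simp: cs_cons)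
  moreover have "Cod C (comp_list C (m2 # rest)) = Cod C m2"
    using comp_props[OF cat] calculation(1) by auto
  ultimately show ?thesis using ms e unfolding fct_def
    by (intro exI[of _ m1] exI[of _ "comp_list C (m2 # rest)"]) auto
qed

lemma L1: "fct C col m0 cs \<Longrightarrow> m \<in> Mor C \<Longrightarrow> col m = col m0 \<Longrightarrow> fct C col m cs"
proof (induction cs arbitrary: m m0 rule: induct_list012)
  case 1 then show ?case using fct_ne by blast
next
  case (2 x) then show ?case by (simp add: fct_single_iff)
next
  case (3 x y r)
  obtain m1 m' where o: "m1 \<in> Mor C" "col m1 = x" "fct C col m' (y # r)" "Dom C m1 = Cod C m'"
     "m0 = Comp C m1 m'" using fct_cons[OF 3(3)] by blast
  have m': "m' \<in> Mor C" using fct_mor o(3) by blast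
  obtain g1 g2 where g: "g1 \<in> Mor C" "g2 \<in> Mor C" "Dom C g1 = Cod C g2" "m = Comp C g1 g2"
    "col g1 = col m1" "col g2 = col m'"
    using mc 3(4,5) o m' unfolding morphism_colored_def by metis
  have "fct C col g2 (y # r)" using 3(2)[OF o(3) g(2) g(6)] .
  from fct_append[OF fct_single[OF g(1)] this g(3)] show ?case using g o by simp
qed

lemma L5: "fct C col m s \<Longrightarrow> fct C col m0 s \<Longrightarrow> fct C col (Ident C (Dom C m0)) v
   \<Longrightarrow> fct C col m (s @ v)"
proof (induction s arbitrary: m m0 rule: induct_list012)
  case 1 then show ?case using fct_ne by blast
next
  case (2 x)
  have m: "m \<in> Mor C" "col m = x" and m0: "m0 \<in> Mor C" "col m0 = x"
    using 2 by (auto simp: fct_single_iff)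
  let ?E = "Ident C (Dom C m0)"
  have E: "?E \<in> Mor C" "Cod C ?E = Dom C m0" "Comp C m0 ?E = m0"
    using cat m0 unfolding category_def by auto
  obtain g1 g2 where g: "g1 \<in> Mor C" "g2 \<in> Mor C" "Dom C g1 = Cod C g2" "m = Comp C g1 g2"
    "col g1 = col m0" "col g2 = col ?E"
    using mc m m0 E unfolding morphism_colored_def by metis
  have "fct C col g2 v" using L1[OF 2(3) g(2) g(6)] .
  from fct_append[OF fct_single[OF g(1)] this g(3)] show ?case using g m0 by simp
next
  case (3 x y r)
  obtain m1 m' where o: "m1 \<in> Mor C" "col m1 = x" "fct C col m' (y # r)" "Dom C m1 = Cod C m'"
     "m = Comp C m1 m'" using fct_cons[OF 3(3)] by blast
  obtain n1 n' where p: "n1 \<in> Mor C" "col n1 = x" "fct C col n' (y # r)" "Dom C n1 = Cod C n'"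
     "m0 = Comp C n1 n'" using fct_cons[OF 3(4)] by blast
  have "Dom C m0 = Dom C n'" using cat p fct_mor[OF p(3)] unfolding category_def by auto
  hence "fct C col m' ((y # r) @ v)" using 3(2)[OF o(3) p(3)] 3(5) by simp
  moreover have "Cod C (comp_list C []) = Cod C (comp_list C [])" by simp
  moreover have "Cod C m' = Cod C m'" by simp
  ultimately show ?case using fct_append[OF fct_single[OF o(1)], of m' "(y#r)@v"] o by simp
qed

lemma L6:
  assumes "fct C col m t" "fct C col m0 t" "fct C col (Ident C (Cod C m0)) v"
  shows "fct C col m (v @ t)"
proof -
  have base: "fct C col m1 (v @ [col m1])" if h: "m1 \<in> Mor C" "n1 \<in> Mor C" "col m1 = col n1"
     "fct C col (Ident C (Cod C n1)) v" for m1 n1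
  proof -
    let ?E = "Ident C (Cod C n1)"
    have E: "?E \<in> Mor C" "Dom C ?E = Cod C n1" "Comp C ?E n1 = n1"
      using cat h unfolding category_def by auto
    obtain g1 g2 where g: "g1 \<in> Mor C" "g2 \<in> Mor C" "Dom C g1 = Cod C g2" "m1 = Comp C g1 g2"
      "col g1 = col ?E" "col g2 = col n1"
      using mc h E unfolding morphism_colored_def by metis
    have "fct C col g1 v" using L1[OF h(4) g(1) g(5)] .
    from fct_append[OF this fct_single[OF g(2)] g(3)] show ?thesis using g h by simp
  qed
  show ?thesis
  proof (cases t)
    case Nil then show ?thesis using assms fct_ne by blast
  next
    case (Cons x r)
    show ?thesis
    proof (cases r)
      case Nil
      then show ?thesis using assms Cons base[of m m0] by (auto simp: fct_single_iff)
    next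
      case (Cons y r')
      obtain m1 m' where o: "m1 \<in> Mor C" "col m1 = x" "fct C col m' (y # r')" "Dom C m1 = Cod C m'"
        "m = Comp C m1 m'" using fct_cons assms(1) \<open>t = x # r\<close> Cons by blast
      obtain n1 n' where p: "n1 \<in> Mor C" "col n1 = x" "fct C col n' (y # r')" "Dom C n1 = Cod C n'"
        "m0 = Comp C n1 n'" using fct_cons assms(2) \<open>t = x # r\<close> Cons by blast
      have "Cod C m0 = Cod C n1" using cat p fct_mor[OF p(3)] unfolding category_def by auto
      hence b: "fct C col m1 (v @ [x])" using base[OF o(1) p(1)] o p assms(3) by simp
      have "Cod C m' = Dom C m1" using o by simp
      from fct_append[OF b o(3)] o show ?thesis using \<open>t = x # r\<close> Cons by simp
    qed
  qed
qed

end

theorem proposition3p5: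
  fixes C :: "('o, 'm) cat" and col :: "'m \<Rightarrow> 'c"
  assumes "groupoid C"
    and "morphism_colored C col"
    and "inverse_compatible C col"
  shows "equiv (col ` Mor C) {(a, b). sim1 C col a b}"
proof -
  have cat: "category C" using assms(1) unfolding groupoid_def by simp
  note mc = assms(2)
  have sim_iff: "sim1 C col a b \<longleftrightarrow> (\<exists>s F G. fct C col F s \<and> fct C col G s \<and> a = col F \<and> b = col G)"
    for a b
  proof
    assume "sim1 C col a b"
    then obtain fs gs where h: "composable_seq C fs" "composable_seq C gs" "length fs = length gs"
        "\<forall>i < length fs. col (fs ! i) = col (gs ! i)"
        "a = col (comp_list C fs)" "b = col (comp_list C gs)" unfolding sim1_def by blast
    have "map col fs = map col gs" using h(3,4) by (simp add: list_eq_iff_nth_eq)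
    thus "\<exists>s F G. fct C col F s \<and> fct C col G s \<and> a = col F \<and> b = col G"
      using h unfolding fct_def by metis
  next
    assume "\<exists>s F G. fct C col F s \<and> fct C col G s \<and> a = col F \<and> b = col G"
    then obtain s fs gs where h: "composable_seq C fs" "map col fs = s" "composable_seq C gs"
      "map col gs = s" "a = col (comp_list C fs)" "b = col (comp_list C gs)"
      unfolding fct_def by blast
    have "length fs = length gs" using h by (metis length_map)
    moreover have "\<forall>i < length fs. col (fs ! i) = col (gs ! i)"
      using h calculation by (metis nth_map)
    ultimately show "sim1 C col a b" using h unfolding sim1_def by blast
  qed
  show ?thesis
    unfolding equiv_def
  proof (intro conjI)
    show "{(a, b). sim1 C col a b} \<subseteq> col ` Mor C \<times> col ` Mor C"
      using sim_iff fct_mor[OF cat mc] by blast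
    show "refl_on (col ` Mor C) {(a, b). sim1 C col a b}"
      unfolding refl_on_def
    proof (intro ballI)
      fix x assume "x \<in> col ` Mor C"
      then obtain m where "m \<in> Mor C" "x = col m" by blast
      then show "(x, x) \<in> {(a, b). sim1 C col a b}"
        using sim_iff fct_single[OF cat mc] by blast
    qed
    show "sym {(a, b). sim1 C col a b}"
      unfolding sym_def using sim_iff by blast
    show "trans {(a, b). sim1 C col a b}"
      unfolding trans_def
    proof (intro allI impI)
      fix a b c assume ab: "(a, b) \<in> {(a, b). sim1 C col a b}" and bc: "(b, c) \<in> {(a, b). sim1 C col a b}"
      obtain s F G0 where 1: "fct C col F s" "fct C col G0 s" "a = col F" "b = col G0"
        using ab sim_iff by blast
      obtain t H K where 2: "fct C col H t" "fct C col K t" "b = col H" "c = col K"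
        using bc sim_iff by blast
      have Hm: "H \<in> Mor C" using fct_mor[OF cat mc 2(1)] .
      have Hs: "fct C col H s" using L1[OF cat mc 1(2) Hm] 1 2 by simp
      obtain Hi where Hi: "is_inverse C H Hi" using assms(1) Hm unfolding groupoid_def by blast
      have Him: "Hi \<in> Mor C" "Dom C Hi = Cod C H" "Cod C Hi = Dom C H"
        "Comp C Hi H = Ident C (Dom C H)" "Comp C H Hi = Ident C (Cod C H)"
        using Hi unfolding is_inverse_def by auto
      have e1: "fct C col (Ident C (Dom C H)) ([col Hi] @ t)"
        using fct_append[OF cat mc fct_single[OF cat mc Him(1)] 2(1) Him(2)] Him(4) by simp
      have e2: "fct C col (Ident C (Cod C H)) (s @ [col Hi])"
        using fct_append[OF cat mc Hs fct_single[OF cat mc Him(1)] Him(3)[symmetric]] Him(5) by simp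
      have "fct C col F (s @ [col Hi] @ t)" using L5[OF cat mc 1(1) Hs e1] .
      moreover have "fct C col K ((s @ [col Hi]) @ t)" using L6[OF cat mc 2(2) 2(1) e2] .
      ultimately show "(a, c) \<in> {(a, b). sim1 C col a b}"
        using sim_iff 1 2 by fastforce
    qed
  qed
qed

end
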